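(* Let $T$ be a plane labelled bipartite tree with $n$ white and $m$ black vertices, where $n+m$ is even. Fix a white vertex $v_i$ as root vertex. Then the value $i(T)\in\{0,1\}$, computed from the string $c(T)$ built with root vertex $v_i$ and root edge $e$, is the same for every choice of the root edge $e$ among the edges incident to $v_i$.
   Context: A plane labelled bipartite tree with $n$ white and $m$ black vertices is defined as follows. It is a finite tree embedded in the oriented plane, considered up to orientation-preserving homeomorphism. Its vertices are colored white and black so that adjacent vertices have different colors. The white vertices carry the distinct labels $v_1,\dots,v_n$ and the black vertices the distinct labels $u_1,\dots,u_m$. String $c(T)$: choose a white vertex $v_i$ (the root vertex) and an edge $e$ incident to it (the root edge). Walk counterclockwise around $T$, i.e. perform the contour walk around the tree keeping the tree on the left, starting at $v_i$ and first traversing $e$, until returning to $v_i$ after all edges have been traversed twice. Whenever a vertex is met for the first time, write its label. Whenever a vertex is met for the last time, write a closing bracket ")". For example, for the path $v_1-u_1-v_2-u_2$ rooted at $v_1$, $c(T)=v_1u_1v_2u_2))))$. The string contains $n+m$ labels and $n+m$ brackets. Invariant: let - $a$ be the number of pairs of white labels $v_k,v_l$ with $v_k$ occurring before $v_l$ in $c(T)$ and $k>l$; - $b$ be the analogous number of inversions among black labels $u_k$; - $c$ be the number of pairs (black label $u$, white label $v$) with $u$ occurring before $v$ in $c(T)$; - $d$ be the number of pairs (closing bracket, label) with the bracket occurring before the label in $c(T)$; - $e_0=|n-m|/2$. Then $i(T)\in\{0,1\}$ is defined by $i(T)\equiv a+b+c+\tfrac{d+e_0}{2}\pmod 2$. The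 tree is called even if $i(T)=0$ and odd if $i(T)=1$. *)

theory Defs
  imports Main
begin

(* Vertices: white vertex v_i is W i, black vertex u_j is B j. *)
datatype vtx = W nat | B nat

(* Tokens of the string c(T): a label or a closing bracket. *)
datatype tok = Lab vtx | Close

definition verts :: "nat \<Rightarrow> nat \<Rightarrow> vtx set" where
  "verts n m = W ` {1..n} \<union> B ` {1..m}"

(* A plane tree is given by its rotation system: rot v lists the neighbours of v
   in counterclockwise cyclic order around v (starting point irrelevant). *)
definition adj :: "(vtx \<Rightarrow> vtx list) \<Rightarrow> (vtx \<times> vtx) set" where
  "adj rot = {(u, v). v \<in> set (rot u)}"

definition plane_bip_tree :: "nat \<Rightarrow> nat \<Rightarrow> (vtx \<Rightarrow> vtx list) \<Rightarrow> bool" where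
  "plane_bip_tree n m rot \<longleftrightarrow>
     (\<forall>v. v \<notin> verts n m \<longrightarrow> rot v = []) \<and>
     (\<forall>v\<in>verts n m. distinct (rot v) \<and> set (rot v) \<subseteq> verts n m) \<and>
     (\<forall>u v. v \<in> set (rot u) \<longleftrightarrow> u \<in> set (rot v)) \<and>
     (\<forall>i j. W i \<notin> set (rot (W j))) \<and>
     (\<forall>i j. B i \<notin> set (rot (B j))) \<and>
     (\<forall>u\<in>verts n m. \<forall>v\<in>verts n m. (u, v) \<in> (adj rot)\<^sup>*) \<and>
     (\<Sum>v\<in>verts n m. length (rot v)) = 2 * (card (verts n m) - 1)"

definition pos_in :: "'a list \<Rightarrow> 'a \<Rightarrow> nat" where
  "pos_in xs x = (LEAST k. k < length xs \<and> xs ! k = x)"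

definition next_ccw :: "(vtx \<Rightarrow> vtx list) \<Rightarrow> vtx \<Rightarrow> vtx \<Rightarrow> vtx" where
  "next_ccw rot v u = rot v ! ((pos_in (rot v) u + 1) mod length (rot v))"

(* one step of the contour walk on darts (directed edges) *)
definition step :: "(vtx \<Rightarrow> vtx list) \<Rightarrow> vtx \<times> vtx \<Rightarrow> vtx \<times> vtx" where
  "step rot d = (snd d, next_ccw rot (snd d) (fst d))"

(* sequence of vertices visited by the contour walk starting at r, first traversing edge r-w;
   it has 2(#edges)+1 entries, the first and last being r *)
definition walk :: "nat \<Rightarrow> nat \<Rightarrow> (vtx \<Rightarrow> vtx list) \<Rightarrow> vtx \<Rightarrow> vtx \<Rightarrow> vtx list" where
  "walk n m rot r w =
     map (\<lambda>k. fst ((step rot ^^ k) (r, w))) [0..<2 * (card (verts n m) - 1) + 1]"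

(* the string c(T): at each visit, label if first visit, then bracket if last visit *)
definition cstr :: "nat \<Rightarrow> nat \<Rightarrow> (vtx \<Rightarrow> vtx list) \<Rightarrow> vtx \<Rightarrow> vtx \<Rightarrow> tok list" where
  "cstr n m rot r w =
     (let ws = walk n m rot r w in
      concat (map (\<lambda>k. (if ws ! k \<notin> set (take k ws) then [Lab (ws ! k)] else [])
                      @ (if ws ! k \<notin> set (drop (Suc k) ws) then [Close] else []))
                  [0..<length ws]))"

definition count_pairs :: "(tok \<Rightarrow> tok \<Rightarrow> bool) \<Rightarrow> tok list \<Rightarrow> nat" where
  "count_pairs P s = card {(i, j). i < j \<and> j < length s \<and> P (s ! i) (s ! j)}"

definition inv_a :: "tok list \<Rightarrow> nat" where
  "inv_a s = count_pairs (\<lambda>x y. \<exists>k l. x = Lab (W k) \<and> y = Lab (W l) \<and> k > l) s"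

definition inv_b :: "tok list \<Rightarrow> nat" where
  "inv_b s = count_pairs (\<lambda>x y. \<exists>k l. x = Lab (B k) \<and> y = Lab (B l) \<and> k > l) s"

definition inv_c :: "tok list \<Rightarrow> nat" where
  "inv_c s = count_pairs (\<lambda>x y. \<exists>k l. x = Lab (B k) \<and> y = Lab (W l)) s"

definition inv_d :: "tok list \<Rightarrow> nat" where
  "inv_d s = count_pairs (\<lambda>x y. x = Close \<and> (\<exists>z. y = Lab z)) s"

definition e0 :: "nat \<Rightarrow> nat \<Rightarrow> nat" where
  "e0 n m = nat \<bar>int n - int m\<bar> div 2"

definition tree_inv :: "nat \<Rightarrow> nat \<Rightarrow> (vtx \<Rightarrow> vtx list) \<Rightarrow> vtx \<Rightarrow> vtx \<Rightarrow> nat" where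
  "tree_inv n m rot r w =
     (let s = cstr n m rot r w in
      (inv_a s + inv_b s + inv_c s + (inv_d s + e0 n m) div 2) mod 2)"

end

theory Submission
  imports Defs
begin


lemma count_conn:
  assumes fin: "finite V" and r: "r \<in> V" and sub: "R \<subseteq> V \<times> V" and sy: "sym R"
    and conn: "\<forall>x\<in>V. (r, x) \<in> R\<^sup>*"
  shows "2 * (card V - 1) \<le> card R"
proof -
  define dist where "dist x = (LEAST k. (r, x) \<in> R ^^ k)" for x
  have dist_in: "(r, x) \<in> R ^^ dist x" if "x \<in> V" for x
  proof -
    from conn that have "(r,x) \<in> R\<^sup>*" by auto
    then obtain k where "(r,x) \<in> R ^^ k" using rtrancl_power by blast
    then show ?thesis unfolding dist_def by (rule LeastI)
  qed
  have dist_pos: "dist x > 0" if "x \<in> V - {r}" for x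
  proof (rule ccontr)
    assume "\<not> dist x > 0"
    then have "dist x = 0" by simp
    with dist_in[of x] that show False by auto
  qed
  define par where "par x = (SOME y. (r, y) \<in> R ^^ (dist x - 1) \<and> (y, x) \<in> R)" for x
  have par: "(r, par x) \<in> R ^^ (dist x - 1) \<and> (par x, x) \<in> R" if "x \<in> V - {r}" for x
  proof -
    have "(r, x) \<in> R ^^ Suc (dist x - 1)" using dist_in[of x] dist_pos[OF that] that by simp
    then obtain y where "(r, y) \<in> R ^^ (dist x - 1) \<and> (y, x) \<in> R" by (rule relpow_Suc_E) blast
    then show ?thesis unfolding par_def by (rule someI)
  qed
  have pd: "dist (par x) < dist x" if "x \<in> V - {r}" for x
  proof -
    have "dist (par x) \<le> dist x - 1" unfolding dist_def[of "par x"]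
      by (rule Least_le) (use par[OF that] in blast)
    with dist_pos[OF that] show ?thesis by simp
  qed
  define F1 where "F1 = (\<lambda>x. (x, par x)) ` (V - {r})"
  define F2 where "F2 = (\<lambda>x. (par x, x)) ` (V - {r})"
  have c1: "card F1 = card V - 1" unfolding F1_def
    by (subst card_image) (auto simp: inj_on_def fin r)
  have c2: "card F2 = card V - 1" unfolding F2_def
    by (subst card_image) (auto simp: inj_on_def fin r)
  have disj: "F1 \<inter> F2 = {}"
  proof (rule ccontr)
    assume "F1 \<inter> F2 \<noteq> {}"
    then obtain x y where x: "x \<in> V - {r}" and y: "y \<in> V - {r}" and eq: "(x, par x) = (par y, y)"
      unfolding F1_def F2_def by auto
    then have e1: "x = par y" and e2: "y = par x" by auto
    have "dist y < dist x" using pd[OF x] unfolding e2[symmetric] .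
    moreover have "dist x < dist y" using pd[OF y] unfolding e1[symmetric] .
    ultimately show False by simp
  qed
  have "F1 \<union> F2 \<subseteq> R"
  proof
    fix z assume "z \<in> F1 \<union> F2"
    then obtain x where x: "x \<in> V - {r}" and z: "z = (x, par x) \<or> z = (par x, x)"
      unfolding F1_def F2_def by blast
    have "(par x, x) \<in> R" using par[OF x] by blast
    then have "(x, par x) \<in> R" using sy by (meson symD)
    then show "z \<in> R" using z \<open>(par x, x) \<in> R\<close> by blast
  qed
  moreover have "finite R" using sub fin by (meson finite_SigmaI rev_finite_subset)
  ultimately have "card (F1 \<union> F2) \<le> card R" by (rule card_mono[rotated])
  moreover have "card (F1 \<union> F2) = card F1 + card F2"
  proof -
    have "finite F1" unfolding F1_def using fin by simp
    moreover have "finite F2" unfolding F2_def using fin by simp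
    ultimately show ?thesis using card_Un_disjoint disj by blast
  qed
  ultimately show ?thesis using c1 c2 by simp
qed

lemma bridge:
  assumes fin: "finite V" and sub: "R \<subseteq> V \<times> V" and sy: "sym R"
    and irr: "\<forall>x. (x, x) \<notin> R"
    and conn: "\<forall>x\<in>V. \<forall>y\<in>V. (x, y) \<in> R\<^sup>*"
    and cardR: "card R = 2 * (card V - 1)"
    and uv: "(u, v) \<in> R"
  shows "\<exists>S. v \<in> S \<and> u \<notin> S \<and> (\<forall>a b. (a,b) \<in> R \<and> a \<in> S \<and> b \<notin> S \<longrightarrow> (a,b) = (v,u))
            \<and> (\<forall>a b. (a,b) \<in> R \<and> a \<notin> S \<and> b \<in> S \<longrightarrow> (a,b) = (u,v))"
proof -
  define R' where "R' = R - {(u,v),(v,u)}"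
  define S where "S = {x. (v, x) \<in> R'\<^sup>*}"
  have vu: "(v,u) \<in> R" using uv sy by (auto simp: sym_def)
  have neq: "u \<noteq> v" using uv irr by auto
  have syR': "sym R'" using sy unfolding R'_def sym_def by auto
  have uS: "u \<notin> S"
  proof
    assume "u \<in> S"
    then have a: "(v, u) \<in> R'\<^sup>*" by (simp add: S_def)
    then have b: "(u, v) \<in> R'\<^sup>*" using syR' by (meson sym_rtrancl symD)
    have "R \<subseteq> R'\<^sup>*"
    proof
      fix z assume z: "z \<in> R"
      show "z \<in> R'\<^sup>*"
      proof (cases "z \<in> R'")
        case True then show ?thesis by blast
      next
        case False then have "z = (u,v) \<or> z = (v,u)" using z unfolding R'_def by blast
        then show ?thesis using a b by blast
      qed
    qed
    then have "R\<^sup>* \<subseteq> R'\<^sup>*" by (meson rtrancl_subset_rtrancl)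
    then have connR': "\<forall>x\<in>V. (u, x) \<in> R'\<^sup>*" using conn uv sub by blast
    have uV: "u \<in> V" using uv sub by auto
    have "2 * (card V - 1) \<le> card R'"
      by (rule count_conn[OF fin uV _ syR' connR']) (use sub in \<open>auto simp: R'_def\<close>)
    moreover have "card R' = card R - 2"
      unfolding R'_def using uv vu neq
      by (subst card_Diff_subset) (auto intro: finite_subset[OF sub] simp: fin)
    moreover have "card R \<ge> 2" using cardR uv sub
    proof -
      have "finite R" using sub fin by (meson finite_SigmaI rev_finite_subset)
      have "card {(u,v),(v,u)} \<le> card R"
        by (rule card_mono) (use \<open>finite R\<close> uv vu in auto)
      then show ?thesis using neq by simp
    qed
    ultimately show False using cardR by simp
  qed
  have vS: "v \<in> S" by (simp add: S_def)
  have o: "(a,b) = (v,u)" if "(a,b) \<in> R" "a \<in> S" "b \<notin> S" for a b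
  proof -
    have "(a,b) \<notin> R'" using that unfolding S_def by (meson mem_Collect_eq rtrancl.rtrancl_into_rtrancl)
    then show ?thesis using that uS unfolding R'_def by auto
  qed
  have i: "(a,b) = (u,v)" if "(a,b) \<in> R" "a \<notin> S" "b \<in> S" for a b
  proof -
    have "(b,a) \<notin> R'" using that unfolding S_def by (meson mem_Collect_eq rtrancl.rtrancl_into_rtrancl)
    then have "(a,b) \<notin> R'" using syR' by (meson symD)
    then show ?thesis using that uS unfolding R'_def by auto
  qed
  show ?thesis apply (rule exI[of _ S]) using vS uS o i by blast
qed



lemma pos_in_nth: "distinct xs \<Longrightarrow> j < length xs \<Longrightarrow> pos_in xs (xs ! j) = j"
  unfolding pos_in_def
  by (rule Least_equality) (auto simp: nth_eq_iff_index_eq)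

lemma pos_in_mem: "x \<in> set xs \<Longrightarrow> pos_in xs x < length xs \<and> xs ! pos_in xs x = x"
  unfolding pos_in_def
proof -
  assume "x \<in> set xs"
  then obtain j where "j < length xs \<and> xs ! j = x" by (auto simp: in_set_conv_nth)
  then show "(LEAST k. k < length xs \<and> xs ! k = x) < length xs \<and>
    xs ! (LEAST k. k < length xs \<and> xs ! k = x) = x" by (rule LeastI)
qed

locale pbt =
  fixes n m :: nat and rot :: "vtx \<Rightarrow> vtx list"
  assumes T: "plane_bip_tree n m rot"
begin

abbreviation "V \<equiv> verts n m"
abbreviation "R \<equiv> adj rot"

lemma outside: "v \<notin> V \<Longrightarrow> rot v = []" using T unfolding plane_bip_tree_def by blast
lemma dist_rot: "distinct (rot v)"
  using T outside unfolding plane_bip_tree_def by (cases "v \<in> V") auto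
lemma rot_sub: "set (rot v) \<subseteq> V"
  using T outside unfolding plane_bip_tree_def by (cases "v \<in> V") auto
lemma memR: "(u, v) \<in> R \<longleftrightarrow> v \<in> set (rot u)" by (simp add: adj_def)
lemma symm: "v \<in> set (rot u) \<longleftrightarrow> u \<in> set (rot v)"
  using T unfolding plane_bip_tree_def by blast
lemma symR: "sym R" unfolding sym_def memR using symm by blast
lemma finV: "finite V" by (simp add: verts_def)
lemma cardV: "card V = n + m"
proof -
  have "card V = card (W ` {1..n}) + card (B ` {1..m})"
    unfolding verts_def by (rule card_Un_disjoint) auto
  also have "\<dots> = n + m" by (simp add: card_image inj_on_def)
  finally show ?thesis .
qed
lemma R_sub: "R \<subseteq> V \<times> V"
proof
  fix z assume "z \<in> R"
  then obtain u v where z: "z = (u,v)" and "v \<in> set (rot u)" by (auto simp: adj_def)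
  then have "v \<in> V" "u \<in> V" using rot_sub outside by (blast, force)
  then show "z \<in> V \<times> V" using z by auto
qed
lemma irrR: "\<forall>x. (x, x) \<notin> R"
proof
  fix x show "(x,x) \<notin> R"
    using T unfolding plane_bip_tree_def memR by (cases x) auto
qed
lemma connR: "\<forall>x\<in>V. \<forall>y\<in>V. (x, y) \<in> R\<^sup>*"
  using T unfolding plane_bip_tree_def by blast
lemma R_Sigma: "R = (SIGMA u:V. set (rot u))"
  using outside unfolding adj_def by fastforce
lemma cardR: "card R = 2 * (card V - 1)"
proof -
  have "card R = (\<Sum>u\<in>V. card (set (rot u)))"
    unfolding R_Sigma by (rule card_SigmaI) (auto simp: finV)
  also have "\<dots> = (\<Sum>u\<in>V. length (rot u))" using dist_rot by (simp add: distinct_card)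
  finally show ?thesis using T unfolding plane_bip_tree_def by simp
qed
lemma finR: "finite R" using R_sub finV by (meson finite_SigmaI rev_finite_subset)

lemma bridgeR: "(u, v) \<in> R \<Longrightarrow> \<exists>S. v \<in> S \<and> u \<notin> S \<and> (\<forall>a b. (a,b) \<in> R \<and> a \<in> S \<and> b \<notin> S \<longrightarrow> (a,b) = (v,u))
            \<and> (\<forall>a b. (a,b) \<in> R \<and> a \<notin> S \<and> b \<in> S \<longrightarrow> (a,b) = (u,v))"
  by (rule bridge[OF finV R_sub symR irrR connR cardR])

lemma next_nth: "j < length (rot x) \<Longrightarrow> next_ccw rot x (rot x ! j) = rot x ! ((j + 1) mod length (rot x))"
  unfolding next_ccw_def using pos_in_nth[OF dist_rot] by simp

lemma step_R: "d \<in> R \<Longrightarrow> step rot d \<in> R"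
proof -
  assume "d \<in> R"
  then obtain u v where d: "d = (u,v)" and "v \<in> set (rot u)" by (auto simp: adj_def)
  then have uv: "u \<in> set (rot v)" using symm by blast
  then have "rot v \<noteq> []" by auto
  then have "next_ccw rot v u \<in> set (rot v)" unfolding next_ccw_def by simp
  then show ?thesis using d by (simp add: step_def memR)
qed

lemma step_inj: "inj_on (step rot) R"
proof (rule inj_onI)
  fix d e assume dR: "d \<in> R" and eR: "e \<in> R" and eq: "step rot d = step rot e"
  obtain u v where d: "d = (u,v)" and "v \<in> set (rot u)" using dR by (auto simp: adj_def)
  obtain u' v' where e: "e = (u',v')" and "v' \<in> set (rot u')" using eR by (auto simp: adj_def)
  have u: "u \<in> set (rot v)" and u': "u' \<in> set (rot v')" using symm \<open>v \<in> set (rot u)\<close> \<open>v' \<in> set (rot u')\<close> by auto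
  from eq have vv: "v = v'" by (simp add: step_def d e)
  let ?L = "length (rot v)"
  have L: "?L > 0" using u by (cases "rot v") auto
  have p1: "pos_in (rot v) u < ?L" "rot v ! pos_in (rot v) u = u" using pos_in_mem[OF u] by auto
  have p2: "pos_in (rot v) u' < ?L" "rot v ! pos_in (rot v) u' = u'" using pos_in_mem[OF u'] vv by auto
  from eq have "rot v ! ((pos_in (rot v) u + 1) mod ?L) = rot v ! ((pos_in (rot v) u' + 1) mod ?L)"
    by (simp add: step_def d e next_ccw_def vv)
  then have "(pos_in (rot v) u + 1) mod ?L = (pos_in (rot v) u' + 1) mod ?L"
    using nth_eq_iff_index_eq[OF dist_rot] L by simp
  then have "pos_in (rot v) u = pos_in (rot v) u'" using p1 p2
    by (metis Suc_eq_plus1 Suc_lessI mod_Suc mod_less nat.inject nat.simps(3))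
  then have "u = u'" using p1 p2 by metis
  then show "d = e" using d e vv by simp
qed

end


lemma crossing:
  assumes "Q (f a)" "\<not> Q (f b)" "a \<le> b"
  shows "\<exists>k. a \<le> k \<and> k < b \<and> Q (f k) \<and> \<not> Q (f (Suc k))"
  using assms
proof (induction b)
  case 0 then show ?case by simp
next
  case (Suc b)
  show ?case
  proof (cases "Q (f b)")
    case True
    then show ?thesis using Suc.prems by (intro exI[of _ b]) (auto simp: le_Suc_eq)
  next
    case False
    have "a \<le> b" using Suc.prems False by (auto simp: le_Suc_eq)
    from Suc.IH[OF Suc.prems(1) False this] show ?thesis by (meson less_SucI)
  qed
qed

context pbt begin

definition orb :: "vtx \<times> vtx \<Rightarrow> nat \<Rightarrow> vtx \<times> vtx" where
  "orb d k = (step rot ^^ k) d"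

lemma orb_0[simp]: "orb d 0 = d" by (simp add: orb_def)
lemma orb_Suc: "orb d (Suc k) = step rot (orb d k)" by (simp add: orb_def)
lemma orb_add: "orb d (a + b) = orb (orb d a) b"
  unfolding orb_def by (metis add.commute comp_apply funpow_add)
lemma orb_R: "d \<in> R \<Longrightarrow> orb d k \<in> R"
  by (induction k) (auto simp: orb_Suc step_R)

lemma orb_back: "d \<in> R \<Longrightarrow> orb d (Suc x) = orb d (Suc y) \<Longrightarrow> orb d x = orb d y"
  using step_inj orb_R unfolding orb_Suc inj_on_def by blast

lemma orb_shift: "d \<in> R \<Longrightarrow> orb d a = orb d (a + k) \<Longrightarrow> orb d 0 = orb d k"
proof (induction a)
  case 0 then show ?case by simp
next
  case (Suc a)
  then show ?case using orb_back[of d a "a + k"] by simp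
qed

lemma period_ex: assumes "d \<in> R" shows "\<exists>p. 0 < p \<and> orb d p = d"
proof -
  have "orb d ` {0..card R} \<subseteq> R" using orb_R[OF assms] by blast
  then have "card (orb d ` {0..card R}) \<le> card R" using finR card_mono by blast
  then have "\<not> inj_on (orb d) {0..card R}"
    using card_image by fastforce
  then obtain a b where ab: "a \<noteq> b" "orb d a = orb d b" unfolding inj_on_def by blast
  show ?thesis
  proof (cases "a < b")
    case True
    then have "orb d 0 = orb d (b - a)" using orb_shift[OF assms, of a "b - a"] ab by simp
    then show ?thesis using True by (intro exI[of _ "b - a"]) simp
  next
    case False
    then have "b < a" using ab by simp
    then have "orb d 0 = orb d (a - b)" using orb_shift[OF assms, of b "a - b"] ab by simp
    then show ?thesis using \<open>b < a\<close> by (intro exI[of _ "a - b"]) simp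
  qed
qed

definition per :: "vtx \<times> vtx \<Rightarrow> nat" where
  "per d = (LEAST p. 0 < p \<and> orb d p = d)"

lemma per: assumes "d \<in> R" shows "0 < per d" "orb d (per d) = d"
proof -
  from period_ex[OF assms] obtain p where "0 < p \<and> orb d p = d" by blast
  then have "0 < per d \<and> orb d (per d) = d" unfolding per_def by (rule LeastI)
  then show "0 < per d" "orb d (per d) = d" by auto
qed

lemma orb_per_add: assumes "d \<in> R" shows "orb d (k + per d) = orb d k"
proof -
  have "orb d (k + per d) = orb d (per d + k)" by (simp add: add.commute)
  also have "\<dots> = orb d k" using per(2)[OF assms] by (simp add: orb_add)
  finally show ?thesis .
qed

lemma orb_mod: assumes "d \<in> R" shows "orb d k = orb d (k mod per d)"
proof (induction k rule: less_induct)
  case (less k)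
  show ?case
  proof (cases "k < per d")
    case True then show ?thesis by simp
  next
    case False
    then have k: "k = (k - per d) + per d" by simp
    have "orb d k = orb d (k - per d)" by (subst k, rule orb_per_add[OF assms])
    also have "\<dots> = orb d ((k - per d) mod per d)" using less per(1)[OF assms] False by simp
    also have "(k - per d) mod per d = k mod per d" using False by (simp add: mod_if)
    finally show ?thesis .
  qed
qed

lemma orb_inj: assumes "d \<in> R" shows "inj_on (orb d) {..<per d}"
proof (rule inj_onI, rule ccontr)
  fix x y assume x: "x \<in> {..<per d}" and y: "y \<in> {..<per d}" and eq: "orb d x = orb d y" and ne: "x \<noteq> y"
  have key: "False" if "a < b" "b < per d" "orb d a = orb d b" for a b
  proof -
    have "orb d 0 = orb d (b - a)" using orb_shift[OF assms, of a "b - a"] that by simp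
    then have "0 < b - a \<and> orb d (b - a) = d" using that by simp
    then have "per d \<le> b - a" unfolding per_def by (rule Least_le)
    then show False using that by simp
  qed
  show False
  proof (cases "x < y")
    case True then show ?thesis using key[of x y] y eq by simp
  next
    case False then show ?thesis using key[of y x] x eq ne by simp
  qed
qed

lemma orb_range: assumes "d \<in> R" shows "range (orb d) = orb d ` {..<per d}"
proof
  show "range (orb d) \<subseteq> orb d ` {..<per d}"
  proof
    fix z assume "z \<in> range (orb d)"
    then obtain k where "z = orb d k" by blast
    then have "z = orb d (k mod per d)" using orb_mod[OF assms] by simp
    then show "z \<in> orb d ` {..<per d}" using per(1)[OF assms] by simp
  qed
qed auto

lemma orb_rev: assumes dR: "d \<in> R" and uv: "(u, v) \<in> range (orb d)"
  shows "(v, u) \<in> range (orb d)"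
proof -
  obtain a where a: "orb d a = (u, v)" using uv by auto
  have uvR: "(u,v) \<in> R" using orb_R[OF dR] a by metis
  obtain S where vS: "v \<in> S" and uS: "u \<notin> S" and out: "\<forall>a b. (a,b) \<in> R \<and> a \<in> S \<and> b \<notin> S \<longrightarrow> (a,b) = (v,u)"
    using bridgeR[OF uvR] by blast
  define g where "g k = fst (orb (u,v) k)" for k
  have g1: "g 1 \<in> S" using vS by (simp add: g_def orb_def step_def)
  have gP: "g (per (u,v)) \<notin> S" using uS per(2)[OF uvR] by (simp add: g_def)
  have "1 \<le> per (u,v)" using per(1)[OF uvR] by simp
  from crossing[of "\<lambda>x. x \<in> S", OF g1 gP this] obtain k where
    k: "g k \<in> S" "g (Suc k) \<notin> S" by blast
  have okR: "orb (u,v) k \<in> R" using orb_R[OF uvR] .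
  have "g (Suc k) = snd (orb (u,v) k)" by (simp add: g_def orb_Suc step_def)
  then have "orb (u,v) k = (v, u)" using out okR k unfolding g_def
    by (metis prod.collapse)
  then have "orb d (a + k) = (v,u)" using a by (simp add: orb_add)
  then show ?thesis by (metis rangeI)
qed

lemma orb_all: assumes dR: "d \<in> R" shows "range (orb d) = R"
proof
  show "range (orb d) \<subseteq> R" using orb_R[OF dR] by auto
next
  let ?O = "range (orb d)"
  have nxt: "(x, next_ccw rot x y) \<in> ?O" if "(x,y) \<in> ?O" for x y
  proof -
    have "(y,x) \<in> ?O" using orb_rev[OF dR that] .
    then obtain a where "orb d a = (y,x)" by auto
    then have "orb d (Suc a) = (x, next_ccw rot x y)" by (simp add: orb_Suc step_def)
    then show ?thesis by (metis rangeI)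
  qed
  have out: "(x, z) \<in> ?O" if xy: "(x,y) \<in> ?O" and z: "z \<in> set (rot x)" for x y z
  proof -
    have yR: "(x,y) \<in> R" using xy orb_R[OF dR] by auto
    then have "y \<in> set (rot x)" by (simp add: memR)
    then obtain i where i: "i < length (rot x)" "rot x ! i = y" by (auto simp: in_set_conv_nth)
    let ?L = "length (rot x)"
    have it: "(x, rot x ! ((i + k) mod ?L)) \<in> ?O" for k
    proof (induction k)
      case 0 then show ?case using i xy by simp
    next
      case (Suc k)
      have lt: "(i + k) mod ?L < ?L" by (rule mod_less_divisor) (use i(1) in \<open>cases "rot x"; simp\<close>)
      have "(x, next_ccw rot x (rot x ! ((i + k) mod ?L))) \<in> ?O" using nxt[OF Suc.IH] .
      also have "next_ccw rot x (rot x ! ((i + k) mod ?L)) = rot x ! (((i + k) mod ?L + 1) mod ?L)"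
        using next_nth[OF lt] .
      also have "((i + k) mod ?L + 1) mod ?L = (i + Suc k) mod ?L" by (simp add: mod_Suc_eq)
      finally show ?case .
    qed
    obtain j where j: "j < ?L" "rot x ! j = z" using z by (auto simp: in_set_conv_nth)
    have "(i + (j + ?L - i)) mod ?L = j" using i j by simp
    then show ?thesis using it[of "j + ?L - i"] j by simp
  qed
  define X where "X = {x. \<exists>y. (x,y) \<in> ?O}"
  obtain r w where d: "d = (r,w)" by (cases d)
  have "orb d 0 = (r,w)" using d by simp
  then have "(r,w) \<in> ?O" by (metis rangeI)
  then have rX: "r \<in> X" unfolding X_def by blast
  have clos: "z \<in> X" if "x \<in> X" "(x,z) \<in> R" for x z
  proof -
    from that obtain y where xy: "(x,y) \<in> ?O" unfolding X_def by blast
    have "z \<in> set (rot x)" using that(2) memR by blast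
    then have "(x,z) \<in> ?O" using out[OF xy] by blast
    then have "(z,x) \<in> ?O" using orb_rev[OF dR] by blast
    then show ?thesis unfolding X_def by blast
  qed
  have rV: "r \<in> V" using dR d R_sub by auto
  have "x \<in> X" if "x \<in> V" for x
  proof -
    have "(r,x) \<in> R\<^sup>*" using connR rV that by blast
    then show ?thesis
    proof (induction rule: rtrancl_induct)
      case base then show ?case using rX .
    next
      case (step y z) then show ?case using clos by blast
    qed
  qed
  then show "R \<subseteq> ?O"
  proof -
    have "z \<in> ?O" if "z \<in> R" for z
    proof -
      obtain x y where z: "z = (x,y)" by (cases z)
      have "x \<in> V" using that z R_sub by auto
      then have "x \<in> X" using \<open>\<And>x. x \<in> V \<Longrightarrow> x \<in> X\<close> by blast
      then obtain y' where xy: "(x,y') \<in> ?O" unfolding X_def by blast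
      have "y \<in> set (rot x)" using that z memR by blast
      then show ?thesis using out[OF xy] z by blast
    qed
    then show ?thesis by blast
  qed
qed

lemma per_card: assumes dR: "d \<in> R" shows "per d = card R"
proof -
  have "card (orb d ` {..<per d}) = per d" using orb_inj[OF dR] by (simp add: card_image)
  then show ?thesis using orb_all[OF dR] orb_range[OF dR] by simp
qed

end


fun cs :: "vtx set \<Rightarrow> vtx set \<Rightarrow> vtx list \<Rightarrow> tok list" where
  "cs Pre Post [] = []"
| "cs Pre Post (x # xs) = (if x \<notin> Pre then [Lab x] else []) @ (if x \<notin> set xs \<union> Post then [Close] else [])
      @ cs (insert x Pre) Post xs"

lemma cs_append: "cs Pre Post (xs @ ys) = cs Pre (Post \<union> set ys) xs @ cs (Pre \<union> set xs) Post ys"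
  by (induction xs arbitrary: Pre) auto

lemma cs_cong: "Pre \<inter> set xs = Pre' \<inter> set xs \<Longrightarrow> Post \<inter> set xs = Post' \<inter> set xs \<Longrightarrow>
   cs Pre Post xs = cs Pre' Post' xs"
proof (induction xs arbitrary: Pre Pre')
  case Nil then show ?case by simp
next
  case (Cons x xs)
  have 1: "(x \<in> Pre) = (x \<in> Pre')" using Cons.prems by auto
  have 2: "(x \<in> set xs \<union> Post) = (x \<in> set xs \<union> Post')" using Cons.prems by auto
  have 3: "cs (insert x Pre) Post xs = cs (insert x Pre') Post' xs"
    by (rule Cons.IH) (use Cons.prems in auto)
  show ?case using 1 2 3 by simp
qed

definition Gt :: "vtx list \<Rightarrow> nat \<Rightarrow> tok list" where
  "Gt ws k = (if ws ! k \<notin> set (take k ws) then [Lab (ws ! k)] else [])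
                      @ (if ws ! k \<notin> set (drop (Suc k) ws) then [Close] else [])"

lemma Gt_cs_gen: "concat (map (Gt (pre @ xs)) [length pre..<length (pre @ xs)]) = cs (set pre) {} xs"
proof (induction xs arbitrary: pre)
  case Nil then show ?case by simp
next
  case (Cons x xs)
  have u: "[length pre..<length (pre @ x # xs)] = length pre # [length (pre @ [x])..<length ((pre @ [x]) @ xs)]"
    using upt_conv_Cons[of "length pre" "length (pre @ x # xs)"] by simp
  have g: "Gt (pre @ x # xs) (length pre) = (if x \<notin> set pre then [Lab x] else []) @ (if x \<notin> set xs then [Close] else [])"
    by (simp add: Gt_def nth_append)
  have "concat (map (Gt ((pre @ [x]) @ xs)) [length (pre @ [x])..<length ((pre @ [x]) @ xs)]) = cs (set (pre @ [x])) {} xs"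
    by (rule Cons.IH)
  then show ?case using u g by simp
qed

lemma cstr_cs: "cstr n m rot r w = cs {} {} (walk n m rot r w)"
proof -
  have "cstr n m rot r w = concat (map (Gt (walk n m rot r w)) [0..<length (walk n m rot r w)])"
    unfolding cstr_def Let_def Gt_def by simp
  also have "\<dots> = cs {} {} (walk n m rot r w)" using Gt_cs_gen[of "[]"] by simp
  finally show ?thesis .
qed

lemma cs_split:
  assumes "set As \<inter> set Bs \<subseteq> {r}"
  shows "cs {} {} ([r] @ As @ [r] @ Bs @ [r]) = [Lab r] @ cs {r} {r} As @ cs {r} {r} Bs @ [Close]"
proof -
  have "cs {} {} ([r] @ As @ [r] @ Bs @ [r]) = [Lab r] @ cs {r} {} (As @ [r] @ Bs @ [r])" by simp
  also have "cs {r} {} (As @ [r] @ Bs @ [r]) = cs {r} (set ([r] @ Bs @ [r])) As @ cs ({r} \<union> set As) {} ([r] @ Bs @ [r])"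
    using cs_append[of "{r}" "{}" As "[r] @ Bs @ [r]"] by simp
  also have "cs {r} (set ([r] @ Bs @ [r])) As = cs {r} {r} As"
    by (rule cs_cong) (use assms in auto)
  also have "cs ({r} \<union> set As) {} ([r] @ Bs @ [r]) = cs (insert r ({r} \<union> set As)) {} (Bs @ [r])" by simp
  also have "\<dots> = cs (insert r ({r} \<union> set As)) {r} Bs @ cs (insert r ({r} \<union> set As) \<union> set Bs) {} [r]"
    by (simp add: cs_append)
  also have "cs (insert r ({r} \<union> set As)) {r} Bs = cs {r} {r} Bs"
    by (rule cs_cong) (use assms in auto)
  also have "cs (insert r ({r} \<union> set As) \<union> set Bs) {} [r] = [Close]" by simp
  finally show ?thesis by simp
qed

fun isLab :: "tok \<Rightarrow> bool" where
  "isLab (Lab v) = True" | "isLab Close = False"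

lemma cs_nlab: "length (filter isLab (cs Pre Post xs)) = card (set xs - Pre)"
proof (induction xs arbitrary: Pre)
  case Nil then show ?case by simp
next
  case (Cons x xs)
  have ce: "card (set (x # xs) - Pre) = (if x \<in> Pre then 0 else 1) + card (set xs - insert x Pre)"
  proof (cases "x \<in> Pre")
    case True
    then have eq: "set (x # xs) - Pre = set xs - insert x Pre" by auto
    show ?thesis by (simp only: if_P[OF True] add_0 eq)
  next
    case False
    then have eq2: "set (x # xs) - Pre = insert x (set xs - insert x Pre)" by auto
    have c: "card (insert x (set xs - insert x Pre)) = 1 + card (set xs - insert x Pre)" by simp
    show ?thesis by (simp only: if_not_P[OF False] eq2 c)
  qed
  have l: "length (filter isLab (cs Pre Post (x#xs))) = (if x \<in> Pre then 0 else 1) + length (filter isLab (cs (insert x Pre) Post xs))"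
    by simp
  show ?case using l ce Cons.IH[of "insert x Pre"] by linarith
qed

lemma cs_nclose: "length (filter (\<lambda>t. t = Close) (cs Pre Post xs)) = card (set xs - Post)"
proof (induction xs arbitrary: Pre)
  case Nil then show ?case by simp
next
  case (Cons x xs)
  have ce: "card (set (x # xs) - Post) = (if x \<in> set xs \<union> Post then 0 else 1) + card (set xs - Post)"
  proof (cases "x \<in> set xs \<union> Post")
    case True
    then have eq: "set (x # xs) - Post = set xs - Post" by auto
    show ?thesis by (simp only: if_P[OF True] add_0 eq)
  next
    case False
    then have eq2: "set (x # xs) - Post = insert x (set xs - Post)" by auto
    have c: "card (insert x (set xs - Post)) = 1 + card (set xs - Post)" using False by simp
    show ?thesis by (simp only: if_not_P[OF False] eq2 c)
  qed
  have l: "length (filter (\<lambda>t. t = Close) (cs Pre Post (x#xs))) = (if x \<in> set xs \<union> Post then 0 else 1) + length (filter (\<lambda>t. t = Close) (cs (insert x Pre) Post xs))"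
    by simp
  show ?case using l ce Cons.IH[of "insert x Pre"] by linarith
qed

lemma cs_labs: "Lab p \<in> set (cs Pre Post xs) \<Longrightarrow> p \<in> set xs - Pre"
proof (induction xs arbitrary: Pre)
  case Nil then show ?case by simp
next
  case (Cons x xs)
  have "Lab p \<in> set ((if x \<notin> Pre then [Lab x] else []) @ (if x \<notin> set xs \<union> Post then [Close] else [])) \<or> Lab p \<in> set (cs (insert x Pre) Post xs)"
    using Cons.prems by simp
  then show ?case
  proof
    assume "Lab p \<in> set ((if x \<notin> Pre then [Lab x] else []) @ (if x \<notin> set xs \<union> Post then [Close] else []))"
    then have "p = x \<and> x \<notin> Pre" by (cases "x \<in> Pre"; cases "x \<in> set xs \<union> Post") auto
    then show ?thesis by simp
  next
    assume "Lab p \<in> set (cs (insert x Pre) Post xs)"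
    then show ?thesis using Cons.IH by auto
  qed
qed



definition cross :: "(tok \<Rightarrow> tok \<Rightarrow> bool) \<Rightarrow> tok list \<Rightarrow> tok list \<Rightarrow> nat" where
  "cross P xs ys = sum_list (map (\<lambda>y. length (filter (\<lambda>x. P x y) xs)) ys)"

lemma cp_nil: "count_pairs P [] = 0" by (simp add: count_pairs_def)

lemma cp_snoc: "count_pairs P (s @ [y]) = count_pairs P s + length (filter (\<lambda>x. P x y) s)"
proof -
  let ?A = "{(i, j). i < j \<and> j < length s \<and> P (s ! i) (s ! j)}"
  let ?Bs = "(\<lambda>i. (i, length s)) ` {i. i < length s \<and> P (s ! i) y}"
  have eq: "{(i, j). i < j \<and> j < length (s @ [y]) \<and> P ((s @ [y]) ! i) ((s @ [y]) ! j)} = ?A \<union> ?Bs"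
  proof (rule set_eqI)
    fix z :: "nat \<times> nat"
    obtain i j where z: "z = (i,j)" by (cases z)
    show "z \<in> {(i, j). i < j \<and> j < length (s @ [y]) \<and> P ((s @ [y]) ! i) ((s @ [y]) ! j)} \<longleftrightarrow> z \<in> ?A \<union> ?Bs"
      unfolding z by (cases "j < length s"; cases "j = length s") (auto simp: nth_append)
  qed
  have fA: "finite ?A" by (rule finite_subset[of _ "{..<length s} \<times> {..<length s}"]) auto
  have fB: "finite ?Bs" by simp
  have dj: "?A \<inter> ?Bs = {}" by auto
  have cB: "card ?Bs = length (filter (\<lambda>x. P x y) s)"
    by (subst card_image) (auto simp: inj_on_def length_filter_conv_card)
  show ?thesis unfolding count_pairs_def eq card_Un_disjoint[OF fA fB dj] cB ..
qed

lemma cross_Nil2[simp]: "cross P xs [] = 0" by (simp add: cross_def)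
lemma cross_snoc: "cross P xs (ys @ [y]) = cross P xs ys + length (filter (\<lambda>x. P x y) xs)"
  by (simp add: cross_def)
lemma cross_app_right: "cross P xs (ys @ zs) = cross P xs ys + cross P xs zs"
  by (simp add: cross_def)
lemma cross_app_left: "cross P (xs @ zs) ys = cross P xs ys + cross P zs ys"
  by (simp add: cross_def sum_list_addf)

lemma cp_append: "count_pairs P (xs @ ys) = count_pairs P xs + count_pairs P ys + cross P xs ys"
proof (induction ys rule: rev_induct)
  case Nil then show ?case by (simp add: cp_nil)
next
  case (snoc y ys)
  have "count_pairs P (xs @ ys @ [y]) = count_pairs P (xs @ ys) + length (filter (\<lambda>x. P x y) (xs @ ys))"
    using cp_snoc[of P "xs @ ys" y] by simp
  then show ?case using snoc cp_snoc[of P ys y] cross_snoc[of P xs ys y] by simp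
qed

lemma cp_swap: "count_pairs P (a @ X @ Y @ b) + cross P Y X = count_pairs P (a @ Y @ X @ b) + cross P X Y"
  by (simp add: cp_append cross_app_left cross_app_right)

definition ind :: "bool \<Rightarrow> nat" where "ind b = (if b then 1 else 0)"

abbreviation "Pa \<equiv> (\<lambda>x y. \<exists>k l. x = Lab (W k) \<and> y = Lab (W l) \<and> k > l)"
abbreviation "Pb \<equiv> (\<lambda>x y. \<exists>k l. x = Lab (B k) \<and> y = Lab (B l) \<and> k > l)"
abbreviation "Pc \<equiv> (\<lambda>x y. \<exists>k l. x = Lab (B k) \<and> y = Lab (W l))"
abbreviation "Pd \<equiv> (\<lambda>x y. x = Close \<and> (\<exists>z. y = Lab z))"

lemma pair6: "(\<And>p q. x = Lab p \<Longrightarrow> y = Lab q \<Longrightarrow> p \<noteq> q) \<Longrightarrow>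
  ind (Pa x y) + ind (Pb x y) + ind (Pc x y) + ind (Pa y x) + ind (Pb y x) + ind (Pc y x)
   = ind (isLab x \<and> isLab y)"
proof -
  assume h: "\<And>p q. x = Lab p \<Longrightarrow> y = Lab q \<Longrightarrow> p \<noteq> q"
  show ?thesis
  proof (cases x)
    case (Lab p) note xp = this
    show ?thesis
    proof (cases y)
      case (Lab q)
      have "p \<noteq> q" using h xp Lab by blast
      then show ?thesis using xp Lab by (cases p; cases q) (auto simp: ind_def)
    next
      case Close then show ?thesis using xp by (cases p) (auto simp: ind_def)
    qed
  next
    case Close then show ?thesis by (cases y) (auto simp: ind_def)
  qed
qed

lemma len_filter_Cons: "length (filter P (y # ys)) = ind (P y) + length (filter P ys)"
  by (simp add: ind_def)

lemma six_sum:
  assumes "\<And>y p q. y \<in> set Y \<Longrightarrow> x = Lab p \<Longrightarrow> y = Lab q \<Longrightarrow> p \<noteq> q"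
  shows "length (filter (Pa x) Y) + length (filter (Pb x) Y) + length (filter (Pc x) Y)
    + length (filter (\<lambda>y. Pa y x) Y) + length (filter (\<lambda>y. Pb y x) Y) + length (filter (\<lambda>y. Pc y x) Y)
    = (if isLab x then length (filter isLab Y) else 0)"
  using assms
proof (induction Y)
  case Nil then show ?case by simp
next
  case (Cons y Y)
  have p: "ind (Pa x y) + ind (Pb x y) + ind (Pc x y) + ind (Pa y x) + ind (Pb y x) + ind (Pc y x)
   = ind (isLab x \<and> isLab y)" by (rule pair6) (use Cons.prems in auto)
  have ih: "length (filter (Pa x) Y) + length (filter (Pb x) Y) + length (filter (Pc x) Y)
    + length (filter (\<lambda>y. Pa y x) Y) + length (filter (\<lambda>y. Pb y x) Y) + length (filter (\<lambda>y. Pc y x) Y)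
    = (if isLab x then length (filter isLab Y) else 0)" by (rule Cons.IH) (use Cons.prems in auto)
  have r: "(if isLab x then ind (isLab y) + length (filter isLab Y) else 0) = ind (isLab x \<and> isLab y) + (if isLab x then length (filter isLab Y) else 0)"
    by (simp add: ind_def)
  show ?case unfolding len_filter_Cons r using p ih by linarith
qed

definition crossA where "crossA X Y = cross Pa X Y + cross Pb X Y + cross Pc X Y"

lemma crossA_sym:
  assumes "\<And>x y p q. x \<in> set X \<Longrightarrow> y \<in> set Y \<Longrightarrow> x = Lab p \<Longrightarrow> y = Lab q \<Longrightarrow> p \<noteq> q"
  shows "crossA X Y + crossA Y X = length (filter isLab X) * length (filter isLab Y)"
  using assms
proof (induction X)
  case Nil then show ?case by (simp add: crossA_def cross_def)
next
  case (Cons x X)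
  have ih: "crossA X Y + crossA Y X = length (filter isLab X) * length (filter isLab Y)"
    by (rule Cons.IH) (use Cons.prems in auto)
  have s: "length (filter (Pa x) Y) + length (filter (Pb x) Y) + length (filter (Pc x) Y)
    + length (filter (\<lambda>y. Pa y x) Y) + length (filter (\<lambda>y. Pb y x) Y) + length (filter (\<lambda>y. Pc y x) Y)
    = (if isLab x then length (filter isLab Y) else 0)" by (rule six_sum) (use Cons.prems in auto)
  have c1: "cross P (x # X) Y = cross P X Y + sum_list (map (\<lambda>y. ind (P x y)) Y)" for P
    unfolding cross_def by (induction Y) (simp_all add: ind_def)
  have c2: "cross P Y (x # X) = cross P Y X + length (filter (\<lambda>y. P y x) Y)" for P
    using cross_app_right[of P Y "[x]" X] by (simp add: cross_def)
  have c3: "sum_list (map (\<lambda>y. ind (P y)) Y) = length (filter P Y)" for P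
    by (induction Y) (simp_all add: ind_def)
  have "crossA (x # X) Y + crossA Y (x # X) = crossA X Y + crossA Y X +
    (length (filter (Pa x) Y) + length (filter (Pb x) Y) + length (filter (Pc x) Y)
    + length (filter (\<lambda>y. Pa y x) Y) + length (filter (\<lambda>y. Pb y x) Y) + length (filter (\<lambda>y. Pc y x) Y))"
    unfolding crossA_def c1 c2 c3[of "Pa x"] c3[of "Pb x"] c3[of "Pc x"] by simp
  also have "\<dots> = length (filter isLab (x # X)) * length (filter isLab Y)"
    unfolding s ih by simp
  finally show ?case .
qed

lemma crossD: "cross Pd X Y = length (filter (\<lambda>t. t = Close) X) * length (filter isLab Y)"
proof (induction Y rule: rev_induct)
  case Nil then show ?case by simp
next
  case (snoc y Y)
  have "length (filter (\<lambda>x. Pd x y) X) = (if isLab y then length (filter (\<lambda>t. t = Close) X) else 0)"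
    by (cases y) auto
  then show ?case using snoc by (simp add: cross_snoc)
qed



lemma upt_split3: "a \<le> b \<Longrightarrow> b \<le> c \<Longrightarrow> [a..<c] = [a..<b] @ [b..<c]"
  using upt_add_eq_append[of a b "c - b"] by simp

context pbt begin

lemma walk_orb: "walk n m rot r w = map (\<lambda>k. fst (orb (r, w) k)) [0..<Suc (card R)]"
  unfolding walk_def orb_def cardR by simp

lemma inv_eq:
  assumes ev: "even (n + m)" and rV: "W i \<in> V" and e: "e \<in> set (rot (W i))" and e': "e' \<in> set (rot (W i))"
  shows "tree_inv n m rot (W i) e = tree_inv n m rot (W i) e'"
proof -
  define r where "r = W i"
  define d where "d = (r, e)"
  define L where "L = card R"
  define f where "f k = fst (orb d k)" for k
  have dR: "d \<in> R" unfolding d_def r_def using e by (simp add: memR)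
  have perL: "per d = L" unfolding L_def by (rule per_card[OF dR])
  have Lpos: "0 < L" using per(1)[OF dR] perL by simp
  have fper: "f (k + L) = f k" for k unfolding f_def using orb_per_add[OF dR, of k] perL by simp
  have f0: "f 0 = r" by (simp add: f_def d_def)
  have fL: "f L = r" using fper[of 0] f0 by simp
  have orbf: "orb d k = (f k, f (Suc k))" for k
    unfolding f_def orb_Suc by (simp add: step_def)
  have fV: "f k \<in> V" for k using orb_R[OF dR, of k] R_sub unfolding f_def by auto
  have ws: "walk n m rot r e = map f [0..<Suc L]"
    unfolding walk_orb f_def d_def L_def ..
  have "(r, e') \<in> R" unfolding r_def using e' by (simp add: memR)
  then have "(r, e') \<in> orb d ` {..<L}" using orb_all[OF dR] orb_range[OF dR] perL by simp
  then obtain j where jL: "j < L" and dj: "orb d j = (r, e')" by auto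
  have ws': "walk n m rot r e' = map (\<lambda>k. f (j + k)) [0..<Suc L]"
    unfolding walk_orb f_def L_def dj[symmetric] orb_add ..
  show ?thesis
  proof (cases "j = 0")
    case True
    then have "e' = e" using dj by (simp add: d_def)
    then show ?thesis by simp
  next
    case False
    then have j0: "0 < j" by simp
    have fj: "f j = r" using dj unfolding f_def by simp
    define As where "As = map f [1..<j]"
    define Bs where "Bs = map f [Suc j..<L]"
    have wsd: "walk n m rot r e = [r] @ As @ [r] @ Bs @ [r]"
    proof -
      have "[0..<Suc L] = [0..<j] @ [j..<Suc L]" using jL by (intro upt_split3) auto
      also have "[0..<j] = 0 # [1..<j]" using j0 by (simp add: upt_conv_Cons)
      also have "[j..<Suc L] = j # [Suc j..<Suc L]" using jL by (simp add: upt_conv_Cons)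
      also have "[Suc j..<Suc L] = [Suc j..<L] @ [L]" using jL by simp
      finally have "[0..<Suc L] = 0 # [1..<j] @ j # [Suc j..<L] @ [L]" by simp
      then show ?thesis unfolding ws As_def Bs_def using f0 fj fL by simp
    qed
    have wsd': "walk n m rot r e' = [r] @ Bs @ [r] @ As @ [r]"
    proof -
      have "map (\<lambda>k. f (j + k)) [0..<Suc L] = map f (map (\<lambda>k. k + j) [0..<Suc L])"
        by (simp add: add.commute)
      also have "map (\<lambda>k. k + j) [0..<Suc L] = [j..<Suc L + j]" by (rule map_add_upt)
      also have "[j..<Suc L + j] = [j..<Suc L] @ [Suc L..<Suc L + j]" using jL by (intro upt_split3) auto
      also have "[j..<Suc L] = j # [Suc j..<L] @ [L]" using jL by (simp add: upt_conv_Cons)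
      also have "[Suc L..<Suc L + j] = [Suc L..<L + j] @ [L + j]" using j0 by simp
      finally have eq: "map (\<lambda>k. f (j + k)) [0..<Suc L] = [f j] @ map f [Suc j..<L] @ [f L] @ map f [Suc L..<L + j] @ [f (L + j)]"
        by simp
      have "map f [Suc L..<L + j] = As" unfolding As_def
      proof (rule nth_equalityI)
        show "length (map f [Suc L..<L + j]) = length (map f [1..<j])" by simp
        fix k assume "k < length (map f [Suc L..<L + j])"
        then have k: "k < j - 1" by simp
        have "f (Suc L + k) = f (Suc k + L)" by (simp add: add.commute)
        also have "\<dots> = f (Suc k)" by (rule fper)
        finally show "map f [Suc L..<L + j] ! k = map f [1..<j] ! k" using k by simp
      qed
      moreover have "f (L + j) = r" using fper[of j] fj by (simp add: add.commute)
      ultimately show ?thesis using eq ws' fj fL unfolding Bs_def by simp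
    qed
    have disj: "set As \<inter> set Bs \<subseteq> {r}"
    proof
      fix v assume v: "v \<in> set As \<inter> set Bs"
      show "v \<in> {r}"
      proof (rule ccontr)
        assume vr: "v \<notin> {r}"
        from v obtain p where p: "1 \<le> p" "p < j" "f p = v" unfolding As_def by auto
        from v obtain q where q: "Suc j \<le> q" "q < L" "f q = v" unfolding Bs_def by auto
        define t where "t = (GREATEST t. t < p \<and> f t = r)"
        have t: "t < p \<and> f t = r" unfolding t_def
          by (rule GreatestI_nat[of _ 0 p]) (use f0 p in auto)
        have tmax: "s \<le> t" if "s < p" "f s = r" for s unfolding t_def
          by (rule Greatest_le_nat[of _ s p]) (use that in auto)
        define c where "c = f (Suc t)"
        have otc: "orb d t = (r, c)" using orbf[of t] t c_def by simp
        have rcR: "(r, c) \<in> R" using orb_R[OF dR, of t] otc by simp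
        obtain S where cS: "c \<in> S" and rS: "r \<notin> S"
          and out: "\<forall>a b. (a,b) \<in> R \<and> a \<in> S \<and> b \<notin> S \<longrightarrow> (a,b) = (c,r)"
          and inn: "\<forall>a b. (a,b) \<in> R \<and> a \<notin> S \<and> b \<in> S \<longrightarrow> (a,b) = (r,c)"
          using bridgeR[OF rcR] by blast
        have fpS: "f p \<in> S"
        proof (rule ccontr)
          assume np: "f p \<notin> S"
          have "f (Suc t) \<in> S" using cS c_def by simp
          from crossing[of "\<lambda>x. x \<in> S" f "Suc t" p, OF this np] t obtain k where
            k: "Suc t \<le> k" "k < p" "f k \<in> S" "f (Suc k) \<notin> S" by auto
          have "orb d k \<in> R" by (rule orb_R[OF dR])
          then have "(f k, f (Suc k)) = (c, r)" using out k orbf[of k] by simp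
          then have fr: "f (Suc k) = r" by simp
          show False
          proof (cases "Suc k < p")
            case True then show False using tmax[OF True fr] k by simp
          next
            case False then have "Suc k = p" using k by simp
            then show False using fr p vr by simp
          qed
        qed
        then have fqS: "f q \<in> S" using p q by simp
        have "f j \<notin> S" using fj rS by simp
        then obtain k where
          k: "j \<le> k" "k < q" "f k \<notin> S" "f (Suc k) \<in> S"
          using crossing[of "\<lambda>x. x \<notin> S" f j q] fqS q by auto
        have "orb d k \<in> R" by (rule orb_R[OF dR])
        then have "orb d k = (r, c)" using inn k orbf[of k] by simp
        then have "orb d k = orb d t" using otc by simp
        moreover have "k \<in> {..<per d}" "t \<in> {..<per d}" using k q t p perL by auto
        ultimately have "k = t" using orb_inj[OF dR] unfolding inj_on_def by blast
        then show False using k t p by simp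
      qed
    qed
    have cover: "(set As - {r}) \<union> (set Bs - {r}) = V - {r}"
    proof
      show "(set As - {r}) \<union> (set Bs - {r}) \<subseteq> V - {r}" unfolding As_def Bs_def using fV by auto
    next
      show "V - {r} \<subseteq> (set As - {r}) \<union> (set Bs - {r})"
      proof
        fix x assume x: "x \<in> V - {r}"
        have rVV: "r \<in> V" using rV r_def by simp
        have "(r, x) \<in> R\<^sup>*" using connR rVV x by blast
        then obtain y where "(y, x) \<in> R" using x by (metis DiffE insertCI rtranclE)
        then have "(x, y) \<in> R" using symR by (meson symD)
        then have "(x, y) \<in> orb d ` {..<L}" using orb_all[OF dR] orb_range[OF dR] perL by simp
        then obtain k where k: "k < L" "orb d k = (x, y)" by auto
        then have fk: "f k = x" unfolding f_def by simp
        have xr: "x \<noteq> r" using x by simp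
        have "k \<noteq> 0" using fk f0 xr by metis
        moreover have "k \<noteq> j" using fk fj xr by metis
        ultimately have "x \<in> set As \<or> x \<in> set Bs"
        proof (cases "k < j")
          case True
          then have "k \<in> set [1..<j]" using \<open>k \<noteq> 0\<close> by simp
          then have "f k \<in> set As" unfolding As_def set_map by (rule imageI)
          then show ?thesis using fk by simp
        next
          case False
          then have "k \<in> set [Suc j..<L]" using \<open>k \<noteq> j\<close> k(1) by simp
          then have "f k \<in> set Bs" unfolding Bs_def set_map by (rule imageI)
          then show ?thesis using fk by simp
        qed
        then show "x \<in> (set As - {r}) \<union> (set Bs - {r})" using x by auto
      qed
    qed
    have cardAB: "card (set As - {r}) + card (set Bs - {r}) = card V - 1"
    proof -
      have "card ((set As - {r}) \<union> (set Bs - {r})) = card (set As - {r}) + card (set Bs - {r})"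
        by (rule card_Un_disjoint) (use disj in auto)
      then show ?thesis using cover finV rV r_def by (simp add: card_Diff_singleton)
    qed
    define XA where "XA = cs {r} {r} As"
    define XB where "XB = cs {r} {r} Bs"
    have s1: "cstr n m rot r e = [Lab r] @ XA @ XB @ [Close]"
      unfolding cstr_cs wsd XA_def XB_def by (rule cs_split[OF disj])
    have s2: "cstr n m rot r e' = [Lab r] @ XB @ XA @ [Close]"
    proof -
      have "set Bs \<inter> set As \<subseteq> {r}" using disj by auto
      then show ?thesis unfolding cstr_cs wsd' XA_def XB_def by (rule cs_split)
    qed
    define LA where "LA = card (set As - {r})"
    define LB where "LB = card (set Bs - {r})"
    have lA: "length (filter isLab XA) = LA" "length (filter (\<lambda>t. t = Close) XA) = LA"
      unfolding XA_def LA_def by (rule cs_nlab, rule cs_nclose)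
    have lB: "length (filter isLab XB) = LB" "length (filter (\<lambda>t. t = Close) XB) = LB"
      unfolding XB_def LB_def by (rule cs_nlab, rule cs_nclose)
    have cardVn: "card V = n + m" by (rule cardV)
    have eVV: "e \<in> V" "e \<noteq> r" using e rot_sub irrR memR r_def by auto
    have "card V \<ge> 2"
    proof -
      have "card {r, e} \<le> card V" by (rule card_mono[OF finV]) (use eVV rV r_def in auto)
      then show ?thesis using eVV by simp
    qed
    moreover have "LA + LB = card V - 1" using cardAB unfolding LA_def LB_def .
    ultimately have oddS: "odd (LA + LB)" using ev cardVn by presburger
    then have evP: "even (LA * LB)" by simp
    have distl: "p \<noteq> q" if "x \<in> set XA" "y \<in> set XB" "x = Lab p" "y = Lab q" for x y p q
    proof -
      have "p \<in> set As - {r}" using cs_labs that(1,3) unfolding XA_def by blast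
      moreover have "q \<in> set Bs - {r}" using cs_labs that(2,4) unfolding XB_def by blast
      ultimately show ?thesis using disj by auto
    qed
    have cA: "crossA XA XB + crossA XB XA = LA * LB"
      using crossA_sym[of XA XB] distl lA lB by simp
    have sa: "count_pairs Pa ([Lab r] @ XA @ XB @ [Close]) + cross Pa XB XA = count_pairs Pa ([Lab r] @ XB @ XA @ [Close]) + cross Pa XA XB"
      by (rule cp_swap)
    have sb: "count_pairs Pb ([Lab r] @ XA @ XB @ [Close]) + cross Pb XB XA = count_pairs Pb ([Lab r] @ XB @ XA @ [Close]) + cross Pb XA XB"
      by (rule cp_swap)
    have sc: "count_pairs Pc ([Lab r] @ XA @ XB @ [Close]) + cross Pc XB XA = count_pairs Pc ([Lab r] @ XB @ XA @ [Close]) + cross Pc XA XB"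
      by (rule cp_swap)
    have sd: "count_pairs Pd ([Lab r] @ XA @ XB @ [Close]) + cross Pd XB XA = count_pairs Pd ([Lab r] @ XB @ XA @ [Close]) + cross Pd XA XB"
      by (rule cp_swap)
    have dd: "cross Pd XB XA = cross Pd XA XB" using crossD[of XB XA] crossD[of XA XB] lA lB by simp
    define s where "s = [Lab r] @ XA @ XB @ [Close]"
    define s' where "s' = [Lab r] @ XB @ XA @ [Close]"
    have deq: "inv_d s = inv_d s'" using sd dd unfolding inv_d_def s_def s'_def by simp
    have abc: "(inv_a s + inv_b s + inv_c s) mod 2 = (inv_a s' + inv_b s' + inv_c s') mod 2"
    proof -
      have "inv_a s + inv_b s + inv_c s + crossA XB XA = inv_a s' + inv_b s' + inv_c s' + crossA XA XB"
        using sa sb sc unfolding inv_a_def inv_b_def inv_c_def crossA_def s_def s'_def by simp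
      then show ?thesis using cA evP by presburger
    qed
    show ?thesis unfolding tree_inv_def Let_def r_def[symmetric] s1 s2 s_def[symmetric] s'_def[symmetric]
      using deq abc by (metis mod_add_left_eq)
  qed
qed

end

theorem mainTheorem2:
  fixes n m i :: nat and rot :: "vtx \<Rightarrow> vtx list" and e e' :: vtx
  assumes "plane_bip_tree n m rot"
    and "even (n + m)"
    and "i \<in> {1..n}"
    and "e \<in> set (rot (W i))"
    and "e' \<in> set (rot (W i))"
  shows "tree_inv n m rot (W i) e = tree_inv n m rot (W i) e'"
proof -
  interpret pbt n m rot by unfold_locales (rule assms(1))
  have wi: "W i \<in> verts n m" using assms(3) by (simp add: verts_def)
  show ?thesis by (rule inv_eq[OF assms(2) wi assms(4) assms(5)])
qed

end
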